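(* Let $\kappa \le \mathfrak{c}$ be a cardinal of uncountable cofinality. Then there is a family $\{X_\alpha : \alpha < \mathfrak{c}\}$ of pairwise distinct subsets of $2^\omega$, each of size $\kappa$, which are pairwise homeomorphic (as subspaces of $2^\omega$), such that the spaces $\Psi(\mathcal{A}_{X_\alpha})$, $\alpha < \mathfrak{c}$, are pairwise non-homeomorphic.
   Context: For $x \in 2^\omega$ let $\widehat{x} = \{x \restriction k : k \in \omega\} \subseteq 2^{<\omega}$, and for $X \subseteq 2^\omega$ let $\mathcal{A}_X = \{\widehat{x} : x \in X\}$; this is an almost disjoint family on the countable set $2^{<\omega}$ (a family of infinite subsets any two distinct members of which have finite intersection). For an almost disjoint family $\mathcal{A}$ on a countable set $N$, the space $\Psi(\mathcal{A})$ has underlying set $N \cup \mathcal{A}$; points of $N$ are isolated, and basic neighborhoods of a point $x \in \mathcal{A}$ are the sets $\{x\} \cup (x \setminus F)$ with $F \subseteq N$ finite. *)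

theory Defs
  imports "HOL-Analysis.Analysis"
begin

definition cantor_space :: "(nat \<Rightarrow> bool) topology" where
  "cantor_space = product_topology (\<lambda>_. discrete_topology (UNIV :: bool set)) (UNIV :: nat set)"

definition restr :: "(nat \<Rightarrow> bool) \<Rightarrow> nat \<Rightarrow> bool list" where
  "restr x k = map x [0..<k]"

definition branch :: "(nat \<Rightarrow> bool) \<Rightarrow> bool list set" where
  "branch x = {restr x k | k. k \<in> (UNIV :: nat set)}"

definition AD_family :: "(nat \<Rightarrow> bool) set \<Rightarrow> bool list set set" where
  "AD_family X = branch ` X"

text \<open>Psi-space of a family A of subsets of the countable set N (= the whole type 'n).
  Points of N are Inl n, points of A are Inr a.\<close>
definition Psi_space :: "'n set set \<Rightarrow> ('n + 'n set) topology" where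
  "Psi_space A = topology_generated_by
     ({{Inl n} | n. n \<in> (UNIV :: 'n set)} \<union>
      {insert (Inr a) (Inl ` (a - F)) | a F. a \<in> A \<and> finite F})"

definition uncountable_cofinality :: "'k rel \<Rightarrow> bool" where
  "uncountable_cofinality r \<longleftrightarrow>
     (\<forall>A \<subseteq> Field r. countable A \<longrightarrow> (\<exists>x\<in>Field r. \<forall>a\<in>A. (a, x) \<in> r \<and> a \<noteq> x))"

end

theory Submission
  imports Defs
begin

lemma Psi_topspace: "topspace (Psi_space (A :: 'n set set)) = (range Inl \<union> Inr ` A :: ('n + 'n set) set)"
proof
  show "topspace (Psi_space A) \<subseteq> (range Inl \<union> Inr ` A :: ('n + 'n set) set)"
  proof
    fix x assume "x \<in> topspace (Psi_space A)"
    then obtain s where s: "s \<in> {{Inl n} | n. n \<in> (UNIV :: 'n set)} \<union>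
      {insert (Inr a) (Inl ` (a - F)) | a F. a \<in> A \<and> finite F}" "x \<in> s"
      unfolding Psi_space_def topology_generated_by_topspace by (rule UnionE)
    from s(1) show "x \<in> range Inl \<union> Inr ` A"
    proof (rule UnE)
      assume "s \<in> {{Inl n} | n. n \<in> (UNIV :: 'n set)}"
      then obtain n where "s = {Inl n}" by blast
      then show ?thesis using s(2) by simp
    next
      assume "s \<in> {insert (Inr a) (Inl ` (a - F)) | a F. a \<in> A \<and> finite F}"
      then obtain a F where "s = insert (Inr a) (Inl ` (a - F))" "a \<in> A" by blast
      then show ?thesis using s(2) by blast
    qed
  qed
  show "(range Inl \<union> Inr ` A :: ('n + 'n set) set) \<subseteq> topspace (Psi_space A)"
  proof
    fix x :: "'n + 'n set" assume "x \<in> range Inl \<union> Inr ` A"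
    then consider n where "x = Inl n" | a where "a \<in> A" "x = Inr a" by blast
    then show "x \<in> topspace (Psi_space A)"
    proof cases
      case 1
      have "{Inl n} \<in> {{Inl n} | n. n \<in> (UNIV :: 'n set)}" by blast
      then show ?thesis unfolding Psi_space_def topology_generated_by_topspace
        using 1 by (intro UnionI[of "{Inl n}"]) (rule UnI1, assumption, simp)
    next
      case 2
      have "insert (Inr a) (Inl ` (a - {})) \<in> {insert (Inr a) (Inl ` (a - F)) | a F. a \<in> A \<and> finite F}"
        using 2 by blast
      then show ?thesis unfolding Psi_space_def topology_generated_by_topspace
        using 2 by (intro UnionI[of "insert (Inr a) (Inl ` (a - {}))"]) (rule UnI2, assumption, simp)
    qed
  qed
qed

definition nbQ :: "('n + 'n set) set \<Rightarrow> bool" where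
  "nbQ U \<longleftrightarrow> (\<forall>a. Inr a \<in> U \<longrightarrow> (\<exists>F. finite F \<and> insert (Inr a) (Inl ` (a - F)) \<subseteq> U))"

lemma nbQ_Int: "nbQ S \<Longrightarrow> nbQ T \<Longrightarrow> nbQ (S \<inter> T)"
  unfolding nbQ_def
proof (intro allI impI)
  fix a assume S: "\<forall>a. Inr a \<in> S \<longrightarrow> (\<exists>F. finite F \<and> insert (Inr a) (Inl ` (a - F)) \<subseteq> S)"
    and T: "\<forall>a. Inr a \<in> T \<longrightarrow> (\<exists>F. finite F \<and> insert (Inr a) (Inl ` (a - F)) \<subseteq> T)"
    and a: "Inr a \<in> S \<inter> T"
  obtain F1 where F1: "finite F1" "insert (Inr a) (Inl ` (a - F1)) \<subseteq> S" using S a by blast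
  obtain F2 where F2: "finite F2" "insert (Inr a) (Inl ` (a - F2)) \<subseteq> T" using T a by blast
  have "insert (Inr a) (Inl ` (a - (F1 \<union> F2))) \<subseteq> S \<inter> T" using F1(2) F2(2) by blast
  then show "\<exists>F. finite F \<and> insert (Inr a) (Inl ` (a - F)) \<subseteq> S \<inter> T"
    using F1(1) F2(1) by blast
qed

lemma nbQ_UN: "(\<And>k. k \<in> K \<Longrightarrow> nbQ k) \<Longrightarrow> nbQ (\<Union>K)"
  unfolding nbQ_def
proof (intro allI impI)
  fix a assume K: "\<And>k. k \<in> K \<Longrightarrow> \<forall>a. Inr a \<in> k \<longrightarrow> (\<exists>F. finite F \<and> insert (Inr a) (Inl ` (a - F)) \<subseteq> k)"
    and a: "Inr a \<in> \<Union>K"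
  obtain k where k: "k \<in> K" "Inr a \<in> k" using a by (rule UnionE)
  obtain F where F: "finite F" "insert (Inr a) (Inl ` (a - F)) \<subseteq> k" using K[OF k(1)] k(2) by blast
  have "insert (Inr a) (Inl ` (a - F)) \<subseteq> \<Union>K" using F(2) k(1) by blast
  then show "\<exists>F. finite F \<and> insert (Inr a) (Inl ` (a - F)) \<subseteq> \<Union>K" using F(1) by blast
qed

lemma nbQ_topology: "istopology nbQ"
  unfolding istopology_def using nbQ_Int nbQ_UN by blast

lemma nbQ_basis:
  assumes "s \<in> {{Inl n} | n. n \<in> UNIV} \<union> {insert (Inr a) (Inl ` (a - F)) | a F. a \<in> A \<and> finite F}"
  shows "nbQ s"
  unfolding nbQ_def
proof (intro allI impI)
  fix a assume a: "Inr a \<in> s"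
  from assms show "\<exists>F. finite F \<and> insert (Inr a) (Inl ` (a - F)) \<subseteq> s"
  proof (rule UnE)
    assume "s \<in> {{Inl n} | n. n \<in> UNIV}"
    then obtain n where "s = {Inl n}" by blast
    then show ?thesis using a by simp
  next
    assume "s \<in> {insert (Inr a) (Inl ` (a - F)) | a F. a \<in> A \<and> finite F}"
    then obtain a' F where sF: "s = insert (Inr a') (Inl ` (a' - F))" "finite F" by blast
    then have "a = a'" using a by blast
    then show ?thesis using sF by blast
  qed
qed

lemma Psi_open_Inr:
  assumes "openin (Psi_space A) U" "Inr a \<in> U"
  shows "\<exists>F. finite F \<and> insert (Inr a) (Inl ` (a - F)) \<subseteq> U"
proof -
  have g: "generate_topology_on ({{Inl n} | n. n \<in> UNIV} \<union>
      {insert (Inr a) (Inl ` (a - F)) | a F. a \<in> A \<and> finite F}) U"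
    using assms(1) unfolding Psi_space_def openin_topology_generated_by_iff .
  have "nbQ U"
    by (rule generate_topology_on_coarsest[OF nbQ_topology nbQ_basis g])
  then show ?thesis using assms(2) unfolding nbQ_def by blast
qed

lemma Psi_open_Inl: "openin (Psi_space A) {Inl n}"
  unfolding Psi_space_def by (rule topology_generated_by_Basis) blast

lemma Psi_open_Inr_basic: "a \<in> A \<Longrightarrow> openin (Psi_space A) (insert (Inr a) (Inl ` a))"
proof -
  assume a: "a \<in> A"
  have "insert (Inr a) (Inl ` (a - {})) \<in> {insert (Inr a) (Inl ` (a - F)) | a F. a \<in> A \<and> finite F}"
    using a by blast
  then have "insert (Inr a) (Inl ` (a - {})) \<in> {{Inl n} | n. n \<in> UNIV} \<union> {insert (Inr a) (Inl ` (a - F)) | a F. a \<in> A \<and> finite F}"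
    by (rule UnI2)
  then have "openin (Psi_space A) (insert (Inr a) (Inl ` (a - {})))"
    unfolding Psi_space_def by (rule topology_generated_by_Basis)
  then show ?thesis by (simp only: Diff_empty)
qed

lemma Psi_not_iso:
  assumes "infinite b" shows "\<not> openin (Psi_space B) {Inr b}"
proof
  assume "openin (Psi_space B) {Inr b}"
  then have "\<exists>F. finite F \<and> insert (Inr b) (Inl ` (b - F)) \<subseteq> {Inr b}"
    by (rule Psi_open_Inr) simp
  then obtain F where "finite F" "insert (Inr b) (Inl ` (b - F)) \<subseteq> {Inr b}"
    by blast
  then have "b \<subseteq> F" by blast
  then show False using assms \<open>finite F\<close> finite_subset by blast
qed

lemma hom_iso:
  assumes hm: "homeomorphic_maps X Y h k" and p: "p \<in> topspace X" and o: "openin X {p}"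
  shows "openin Y {h p}"
proof -
  have ch: "continuous_map X Y h" and ck: "continuous_map Y X k"
    and kh: "\<forall>x\<in>topspace X. k (h x) = x" and hk: "\<forall>y\<in>topspace Y. h (k y) = y"
    using hm unfolding homeomorphic_maps_def by (blast+)
  have hp: "h p \<in> topspace Y" using continuous_map_image_subset_topspace[OF ch] p by blast
  have "{y \<in> topspace Y. k y \<in> {p}} = {h p}"
    using hp kh hk p by auto
  moreover have "openin Y {y \<in> topspace Y. k y \<in> {p}}"
    using openin_continuous_map_preimage[OF ck o] .
  ultimately show ?thesis by simp
qed

lemma Psi_hom:
  fixes A B :: "'n set set"
  assumes hm: "homeomorphic_maps (Psi_space A) (Psi_space B) h k"
    and infA: "\<forall>a\<in>A. infinite a" and infB: "\<forall>b\<in>B. infinite b"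
  shows "\<exists>f g. inj f \<and> (\<forall>n. h (Inl n) = Inl (f n)) \<and>
    (\<forall>a\<in>A. g a \<in> B \<and> h (Inr a) = Inr (g a) \<and> (\<exists>F. finite F \<and> f ` (a - F) \<subseteq> g a))"
proof -
  have ch: "continuous_map (Psi_space A) (Psi_space B) h" and ck: "continuous_map (Psi_space B) (Psi_space A) k"
    and kh: "\<forall>x\<in>topspace (Psi_space A). k (h x) = x" and hk: "\<forall>y\<in>topspace (Psi_space B). h (k y) = y"
    using hm unfolding homeomorphic_maps_def by (blast+)
  have hm': "homeomorphic_maps (Psi_space B) (Psi_space A) k h"
    using hm homeomorphic_maps_sym by blast
  have hT: "h x \<in> topspace (Psi_space B)" if "x \<in> topspace (Psi_space A)" for x
    using continuous_map_image_subset_topspace[OF ch] that by blast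
  have L: "\<exists>m. h (Inl n) = Inl m" for n
  proof -
    have o: "openin (Psi_space B) {h (Inl n)}"
      using hom_iso[OF hm _ Psi_open_Inl] by (simp add: Psi_topspace)
    have "h (Inl n) \<in> topspace (Psi_space B)" by (rule hT) (simp add: Psi_topspace)
    then have "h (Inl n) \<in> range Inl \<or> h (Inl n) \<in> Inr ` B" by (simp add: Psi_topspace)
    then show ?thesis
    proof
      assume "h (Inl n) \<in> Inr ` B"
      then obtain b where b: "b \<in> B" "h (Inl n) = Inr b" by blast
      then have False using o Psi_not_iso[of b B] infB by simp
      then show ?thesis ..
    qed blast
  qed
  define f where "f n = (SOME m. h (Inl n) = Inl m)" for n
  have fh: "h (Inl n) = Inl (f n)" for n
    unfolding f_def using someI_ex[OF L[of n]] by simp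
  have R: "\<exists>b. b \<in> B \<and> h (Inr a) = Inr b" if "a \<in> A" for a
  proof -
    have "h (Inr a) \<in> topspace (Psi_space B)" by (rule hT) (simp add: Psi_topspace that)
    then have "h (Inr a) \<in> range Inl \<or> h (Inr a) \<in> Inr ` B" by (simp add: Psi_topspace)
    then show ?thesis
    proof
      assume "h (Inr a) \<in> range Inl"
      then obtain m where e: "h (Inr a) = Inl m" by blast
      have "Inr a \<in> topspace (Psi_space A)" using that by (simp add: Psi_topspace)
      then have "k (Inl m) = Inr a" using kh e by force
      moreover have "openin (Psi_space A) {k (Inl m)}"
        using hom_iso[OF hm' _ Psi_open_Inl] by (simp add: Psi_topspace)
      ultimately have False using Psi_not_iso[of a A] infA that by simp
      then show ?thesis ..
    qed blast
  qed
  define g where "g a = (SOME b. b \<in> B \<and> h (Inr a) = Inr b)" for a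
  have gh: "g a \<in> B \<and> h (Inr a) = Inr (g a)" if "a \<in> A" for a
    unfolding g_def using someI_ex[OF R[OF that]] by simp
  have injf: "inj f"
  proof (rule injI)
    fix x y assume "f x = f y"
    then have "k (h (Inl x)) = k (h (Inl y))" by (simp add: fh)
    then show "x = y" using kh by (simp add: Psi_topspace)
  qed
  have finF: "\<exists>F. finite F \<and> f ` (a - F) \<subseteq> g a" if a: "a \<in> A" for a
  proof -
    let ?U = "insert (Inr (g a)) (Inl ` g a)"
    have "openin (Psi_space B) ?U" using Psi_open_Inr_basic gh[OF a] by blast
    then have "openin (Psi_space A) {x \<in> topspace (Psi_space A). h x \<in> ?U}"
      using openin_continuous_map_preimage[OF ch] by blast
    moreover have "Inr a \<in> {x \<in> topspace (Psi_space A). h x \<in> ?U}"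
      using gh[OF a] a by (simp add: Psi_topspace)
    ultimately have "\<exists>F. finite F \<and> insert (Inr a) (Inl ` (a - F)) \<subseteq> {x \<in> topspace (Psi_space A). h x \<in> ?U}"
      by (rule Psi_open_Inr)
    then obtain F where F: "finite F"
      "insert (Inr a) (Inl ` (a - F)) \<subseteq> {x \<in> topspace (Psi_space A). h x \<in> ?U}"
      by blast
    have "f ` (a - F) \<subseteq> g a"
    proof
      fix m assume "m \<in> f ` (a - F)"
      then obtain n where "n \<in> a - F" "m = f n" by blast
      then have "h (Inl n) \<in> ?U" using F(2) by blast
      then show "m \<in> g a" using fh \<open>m = f n\<close> by auto
    qed
    then show ?thesis using F(1) by blast
  qed
  have P: "inj f \<and> (\<forall>n. h (Inl n) = Inl (f n)) \<and>
    (\<forall>a\<in>A. g a \<in> B \<and> h (Inr a) = Inr (g a) \<and> (\<exists>F. finite F \<and> f ` (a - F) \<subseteq> g a))"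
    using injf fh gh finF by blast
  show ?thesis by (rule exI[of _ f], rule exI[of _ g], rule P)
qed


fun pc :: "(nat \<Rightarrow> bool) \<Rightarrow> nat \<Rightarrow> nat" where
  "pc \<alpha> 0 = 1"
| "pc \<alpha> (Suc k) = 2 * pc \<alpha> k + (if \<alpha> k then 1 else 0)"

definition PP :: "(nat \<Rightarrow> bool) \<Rightarrow> nat \<Rightarrow> nat" where
  "PP \<alpha> k = 2 ^ pc \<alpha> k"

definition phi :: "(nat \<Rightarrow> bool) \<Rightarrow> (nat \<Rightarrow> bool) \<Rightarrow> (nat \<Rightarrow> bool)" where
  "phi \<alpha> z = (\<lambda>i. \<exists>k. PP \<alpha> k = i \<and> z k)"

definition fd :: "(nat \<Rightarrow> bool) \<Rightarrow> (nat \<Rightarrow> bool) \<Rightarrow> nat" where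
  "fd x y = (LEAST i. x i \<noteq> y i)"

lemma pc_bounds: "2 ^ k \<le> pc \<alpha> k \<and> pc \<alpha> k < 2 ^ Suc k"
  by (induction k) auto

lemma pc_eq_len: "pc \<alpha> k = pc \<beta> j \<Longrightarrow> k = j"
proof (rule ccontr)
  assume e: "pc \<alpha> k = pc \<beta> j" and ne: "k \<noteq> j"
  show False
  proof (cases "k < j")
    case True
    then have "2 ^ Suc k \<le> (2::nat) ^ j" by (intro power_increasing) auto
    then show False using pc_bounds[of k \<alpha>] pc_bounds[of j \<beta>] e by linarith
  next
    case False
    then have "j < k" using ne by simp
    then have "2 ^ Suc j \<le> (2::nat) ^ k" by (intro power_increasing) auto
    then show False using pc_bounds[of k \<alpha>] pc_bounds[of j \<beta>] e by linarith
  qed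
qed

lemma pc_eq_prefix: "pc \<alpha> k = pc \<beta> k \<Longrightarrow> \<forall>i<k. \<alpha> i = \<beta> i"
proof (induction k)
  case 0
  then show ?case by simp
next
  case (Suc k)
  have "2 * pc \<alpha> k + (if \<alpha> k then 1 else 0) = 2 * pc \<beta> k + (if \<beta> k then 1 else 0)"
    using Suc.prems by simp
  then have "\<alpha> k = \<beta> k" and "pc \<alpha> k = pc \<beta> k" by (auto split: if_splits) presburger+
  then show ?case using Suc.IH less_Suc_eq by auto
qed

lemma pc_pos: "pc \<alpha> k \<ge> 1"
  using pc_bounds[of k \<alpha>] by (meson le_trans one_le_power one_le_numeral)

lemma pc_strict_mono: "strict_mono (pc \<alpha>)"
proof (rule strict_mono_Suc_iff[THEN iffD2], intro allI)
  fix k show "pc \<alpha> k < pc \<alpha> (Suc k)" using pc_pos[of \<alpha> k] by simp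
qed

lemma PP_strict_mono: "strict_mono (PP \<alpha>)"
  unfolding PP_def strict_mono_def using pc_strict_mono[of \<alpha>]
  by (simp add: strict_mono_def)

lemma PP_inj: "PP \<alpha> k = PP \<alpha> j \<longleftrightarrow> k = j"
  using PP_strict_mono[of \<alpha>] strict_mono_eq by blast

lemma phi_PP: "phi \<alpha> z (PP \<alpha> k) = z k"
  unfolding phi_def using PP_inj by auto

lemma phi_inj: "inj (phi \<alpha>)"
proof (rule injI)
  fix z z' assume "phi \<alpha> z = phi \<alpha> z'"
  then have "z k = z' k" for k using phi_PP by metis
  then show "z = z'" by auto
qed

lemma fd_props:
  assumes "x \<noteq> y"
  shows "x (fd x y) \<noteq> y (fd x y)" "\<And>i. i < fd x y \<Longrightarrow> x i = y i"
proof -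
  have ex: "\<exists>i. x i \<noteq> y i" using assms by auto
  show "x (fd x y) \<noteq> y (fd x y)" unfolding fd_def using LeastI_ex[OF ex] .
  show "\<And>i. i < fd x y \<Longrightarrow> x i = y i" unfolding fd_def using not_less_Least by blast
qed

lemma fd_unique:
  assumes "x d \<noteq> y d" "\<And>i. i < d \<Longrightarrow> x i = y i"
  shows "fd x y = d"
  unfolding fd_def using assms by (intro Least_equality) (auto simp: not_less[symmetric])

lemma fd_phi:
  assumes "z \<noteq> z'"
  shows "fd (phi \<alpha> z) (phi \<alpha> z') = PP \<alpha> (fd z z')"
proof (rule fd_unique)
  show "phi \<alpha> z (PP \<alpha> (fd z z')) \<noteq> phi \<alpha> z' (PP \<alpha> (fd z z'))"
    using fd_props(1)[OF assms] by (simp add: phi_PP)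
  fix i assume i: "i < PP \<alpha> (fd z z')"
  show "phi \<alpha> z i = phi \<alpha> z' i"
  proof (cases "\<exists>k. PP \<alpha> k = i")
    case True
    then obtain k where k: "PP \<alpha> k = i" by blast
    then have "k < fd z z'" using i PP_strict_mono[of \<alpha>] strict_mono_less by blast
    then show ?thesis using k fd_props(2)[OF assms] by (metis phi_PP)
  next
    case False
    then show ?thesis unfolding phi_def by auto
  qed
qed

lemma pow2_close:
  assumes "(a::nat) \<noteq> b" "2 ^ a \<le> (2::nat) ^ b + N" "2 ^ b \<le> (2::nat) ^ a + N"
  shows "2 ^ a \<le> 2 * N"
proof (cases "a < b")
  case True
  then have "2 ^ Suc a \<le> (2::nat) ^ b" by (intro power_increasing) auto
  then show ?thesis using assms(3) by simp
next
  case False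
  then have "b < a" using assms(1) by simp
  then have "2 ^ Suc b \<le> (2::nat) ^ a" by (intro power_increasing) auto
  then show ?thesis using assms(2) by simp
qed

lemma far:
  assumes "\<alpha> \<noteq> \<beta>"
  shows "\<exists>K. \<forall>k j. PP \<alpha> k \<le> PP \<beta> j + N \<and> PP \<beta> j \<le> PP \<alpha> k + N \<longrightarrow> k \<le> K"
proof -
  obtain i0 where i0: "\<alpha> i0 \<noteq> \<beta> i0" using assms by auto
  have "k \<le> i0 + 2 * N" if "PP \<alpha> k \<le> PP \<beta> j + N" "PP \<beta> j \<le> PP \<alpha> k + N" for k j
  proof (cases "pc \<alpha> k = pc \<beta> j")
    case True
    then have "k = j" using pc_eq_len by blast
    then have "\<forall>i<k. \<alpha> i = \<beta> i" using pc_eq_prefix True by blast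
    then have "k \<le> i0" using i0 not_le by blast
    then show ?thesis by simp
  next
    case False
    then have "2 ^ pc \<alpha> k \<le> 2 * N" using pow2_close that unfolding PP_def by blast
    moreover have "k < 2 ^ k" by (rule less_exp)
    moreover have "2 ^ k \<le> pc \<alpha> k" using pc_bounds by blast
    moreover have "pc \<alpha> k < 2 ^ pc \<alpha> k" by (rule less_exp)
    ultimately show ?thesis by linarith
  qed
  then show ?thesis by blast
qed


lemma restr_eq: "restr x k = restr y j \<longleftrightarrow> k = j \<and> (\<forall>i<k. x i = y i)"
proof
  assume e: "restr x k = restr y j"
  have "length (restr x k) = length (restr y j)" using e by (rule arg_cong)
  then have "k = j" by (simp add: restr_def)
  then show "k = j \<and> (\<forall>i<k. x i = y i)" using e by (simp add: restr_def map_eq_conv)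
next
  assume "k = j \<and> (\<forall>i<k. x i = y i)"
  then show "restr x k = restr y j" by (simp add: restr_def map_eq_conv)
qed

lemma length_restr [simp]: "length (restr x k) = k"
  by (simp add: restr_def)

lemma restr_inj: "inj (restr x)"
  by (rule injI) (simp add: restr_eq)

lemma branch_eq: "branch x = range (restr x)"
  unfolding branch_def by auto

lemma branch_infinite: "infinite (branch x)"
  unfolding branch_eq using restr_inj[of x] range_inj_infinite by blast

lemma branch_inj: "branch x = branch y \<Longrightarrow> x = y"
proof
  fix i assume e: "branch x = branch y"
  have "restr x (Suc i) \<in> branch x" by (simp add: branch_eq)
  then have "restr x (Suc i) \<in> branch y" using e by blast
  then obtain j where "restr x (Suc i) = restr y j" by (auto simp: branch_eq)
  then show "x i = y i" by (simp add: restr_eq)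
qed

lemma common_restr:
  assumes "x \<noteq> y" "restr x k = restr y k'"
  shows "k \<le> fd x y"
proof (rule ccontr)
  assume "\<not> k \<le> fd x y"
  then have "fd x y < k" by simp
  moreover have "k = k'" "\<forall>i<k. x i = y i" using assms(2) by (simp_all add: restr_eq)
  ultimately show False using fd_props(1)[OF assms(1)] by blast
qed

lemma distort:
  assumes inj: "inj f"
    and hx: "\<forall>c\<in>branch x. n \<le> length c \<longrightarrow> f c \<in> branch y"
    and hx': "\<forall>c\<in>branch x'. n \<le> length c \<longrightarrow> f c \<in> branch y'"
    and nx: "x \<noteq> x'" and ny: "y \<noteq> y'"
  shows "fd x x' \<le> fd y y' + n"
proof (cases "fd x x' < n")
  case True
  then show ?thesis by simp
next
  case False
  let ?d = "fd x x'" and ?e = "fd y y'"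
  let ?S = "restr x ` {n..?d}"
  have sub: "f ` ?S \<subseteq> restr y ` {..?e}"
  proof
    fix c assume "c \<in> f ` ?S"
    then obtain j where j: "j \<in> {n..?d}" "c = f (restr x j)" by blast
    have "restr x j = restr x' j" using j fd_props(2)[OF nx] by (simp add: restr_eq)
    then have c1: "c \<in> branch y" and c2: "c \<in> branch y'"
      using hx hx' j by (auto simp: branch_eq)
    obtain i where i: "c = restr y i" using c1 by (auto simp: branch_eq)
    obtain i' where i': "c = restr y' i'" using c2 by (auto simp: branch_eq)
    have "i \<le> ?e" using common_restr[OF ny] i i' by metis
    then show "c \<in> restr y ` {..?e}" using i by blast
  qed
  have "card (f ` ?S) = card ?S" using inj by (simp add: card_image inj_on_subset)
  also have "card ?S = card {n..?d}" using restr_inj[of x] by (simp add: card_image inj_on_subset)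
  finally have "card {n..?d} \<le> card (restr y ` {..?e})"
    using sub by (metis card_mono finite_atMost finite_imageI)
  also have "\<dots> \<le> card {..?e}" by (rule card_image_le) simp
  finally show ?thesis by simp
qed


lemma finite_len_bound: "finite (F :: 'a list set) \<Longrightarrow> \<exists>n. \<forall>c\<in>F. length c < n"
proof -
  assume "finite F"
  then have "finite (length ` F)" by simp
  then obtain m where "\<forall>l\<in>length ` F. l \<le> m" using finite_nat_set_iff_bounded_le by blast
  then show ?thesis by (intro exI[of _ "Suc m"]) auto
qed

lemma main_nonhom:
  assumes ab: "\<alpha> \<noteq> \<beta>" and unc: "uncountable Z"
  shows "\<not> Psi_space (AD_family (phi \<alpha> ` Z)) homeomorphic_space Psi_space (AD_family (phi \<beta> ` Z))"
proof
  let ?Xa = "phi \<alpha> ` Z" and ?Xb = "phi \<beta> ` Z"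
  let ?A = "AD_family ?Xa" and ?B = "AD_family ?Xb"
  assume "Psi_space ?A homeomorphic_space Psi_space ?B"
  then obtain h k where hm: "homeomorphic_maps (Psi_space ?A) (Psi_space ?B) h k"
    unfolding homeomorphic_space_def by blast
  have hm': "homeomorphic_maps (Psi_space ?B) (Psi_space ?A) k h"
    using hm homeomorphic_maps_sym by blast
  have kh: "\<forall>x\<in>topspace (Psi_space ?A). k (h x) = x"
    using hm unfolding homeomorphic_maps_def by (blast+)
  have infA: "\<forall>a\<in>?A. infinite a" and infB: "\<forall>b\<in>?B. infinite b"
    unfolding AD_family_def using branch_infinite by auto
  obtain f g where inj_f: "inj f" and fh: "\<forall>n. h (Inl n) = Inl (f n)"
    and gA: "\<forall>a\<in>?A. g a \<in> ?B \<and> h (Inr a) = Inr (g a) \<and> (\<exists>F. finite F \<and> f ` (a - F) \<subseteq> g a)"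
    using Psi_hom[OF hm infA infB] by blast
  obtain f' g' where inj_f': "inj f'" 
    and gB: "\<forall>b\<in>?B. g' b \<in> ?A \<and> k (Inr b) = Inr (g' b) \<and> (\<exists>F. finite F \<and> f' ` (b - F) \<subseteq> g' b)"
    using Psi_hom[OF hm' infB infA] by blast
  have gg: "g' (g a) = a" if a: "a \<in> ?A" for a
  proof -
    have "Inr a \<in> topspace (Psi_space ?A)" using a by (simp add: Psi_topspace)
    then have "k (h (Inr a)) = Inr a" using kh by blast
    then show ?thesis using gA gB a by auto
  qed
  have brA: "branch x \<in> ?A" if "x \<in> ?Xa" for x using that unfolding AD_family_def by blast
  have exG: "\<exists>y. y \<in> ?Xb \<and> g (branch x) = branch y" if "x \<in> ?Xa" for x
    using gA brA[OF that] unfolding AD_family_def by blast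
  define G where "G x = (SOME y. y \<in> ?Xb \<and> g (branch x) = branch y)" for x
  have Gp: "G x \<in> ?Xb \<and> g (branch x) = branch (G x)" if "x \<in> ?Xa" for x
    unfolding G_def using someI_ex[OF exG[OF that]] .
  have G_inj: "G x \<noteq> G x'" if "x \<in> ?Xa" "x' \<in> ?Xa" "x \<noteq> x'" for x x'
  proof
    assume "G x = G x'"
    then have "g (branch x) = g (branch x')" using Gp that by simp
    then have "branch x = branch x'" using gg brA that by metis
    then show False using branch_inj that by blast
  qed
  have exN: "\<exists>n. (\<forall>c\<in>branch x. n \<le> length c \<longrightarrow> f c \<in> branch (G x)) \<and>
      (\<forall>c\<in>branch (G x). n \<le> length c \<longrightarrow> f' c \<in> branch x)" if x: "x \<in> ?Xa" for x
  proof -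
    obtain F where F: "finite F" "f ` (branch x - F) \<subseteq> g (branch x)"
      using gA brA[OF x] by blast
    obtain n1 where n1: "\<forall>c\<in>F. length c < n1" using finite_len_bound[OF F(1)] by blast
    have bB: "branch (G x) \<in> ?B" using Gp[OF x] unfolding AD_family_def by blast
    obtain F' where F': "finite F'" "f' ` (branch (G x) - F') \<subseteq> g' (branch (G x))"
      using gB bB by blast
    obtain n2 where n2: "\<forall>c\<in>F'. length c < n2" using finite_len_bound[OF F'(1)] by blast
    have g'G: "g' (branch (G x)) = branch x" using Gp[OF x] gg brA[OF x] by metis
    show ?thesis
    proof (intro exI[of _ "max n1 n2"] conjI ballI impI)
      fix c assume "c \<in> branch x" "max n1 n2 \<le> length c"
      then have "c \<in> branch x - F" using n1 by fastforce
      then show "f c \<in> branch (G x)" using F(2) Gp[OF x] by blast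
    next
      fix c assume "c \<in> branch (G x)" "max n1 n2 \<le> length c"
      then have "c \<in> branch (G x) - F'" using n2 by fastforce
      then show "f' c \<in> branch x" using F'(2) g'G by blast
    qed
  qed
  define Nx where "Nx x = (SOME n. (\<forall>c\<in>branch x. n \<le> length c \<longrightarrow> f c \<in> branch (G x)) \<and>
      (\<forall>c\<in>branch (G x). n \<le> length c \<longrightarrow> f' c \<in> branch x))" for x
  have Np: "(\<forall>c\<in>branch x. Nx x \<le> length c \<longrightarrow> f c \<in> branch (G x)) \<and>
      (\<forall>c\<in>branch (G x). Nx x \<le> length c \<longrightarrow> f' c \<in> branch x)" if "x \<in> ?Xa" for x
    unfolding Nx_def using someI_ex[OF exN[OF that]] .
  have uncXa: "uncountable ?Xa"
    using unc countable_image_inj_on phi_inj by (metis inj_on_subset subset_UNIV)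
  obtain N where infS: "infinite {x \<in> ?Xa. Nx x = N}"
  proof (rule ccontr)
    assume "\<not> thesis"
    then have fin: "finite {x \<in> ?Xa. Nx x = N}" for N using that by blast
    have c: "countable (\<Union>N. {x \<in> ?Xa. Nx x = N})"
      by (rule countable_UN[OF countableI_type]) (rule countable_finite[OF fin])
    have "countable ?Xa" by (rule countable_subset[OF _ c]) blast
    then show False using uncXa by blast
  qed
  let ?S = "{x \<in> ?Xa. Nx x = N}"
  obtain K where K: "\<forall>k j. PP \<alpha> k \<le> PP \<beta> j + N \<and> PP \<beta> j \<le> PP \<alpha> k + N \<longrightarrow> k \<le> K"
    using far[OF ab] by blast
  let ?M = "PP \<alpha> K"
  have bnd: "fd x x' \<le> ?M" if x: "x \<in> ?S" and x': "x' \<in> ?S" and ne: "x \<noteq> x'" for x x'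
  proof -
    obtain z where z: "z \<in> Z" "x = phi \<alpha> z" using x by blast
    obtain z' where z': "z' \<in> Z" "x' = phi \<alpha> z'" using x' by blast
    have zne: "z \<noteq> z'" using z z' ne by blast
    have xa: "x \<in> ?Xa" "x' \<in> ?Xa" using x x' by auto
    obtain w where w: "w \<in> Z" "G x = phi \<beta> w" using Gp[OF xa(1)] by blast
    obtain w' where w': "w' \<in> Z" "G x' = phi \<beta> w'" using Gp[OF xa(2)] by blast
    have Gne: "G x \<noteq> G x'" using G_inj xa ne by blast
    then have wne: "w \<noteq> w'" using w(2) w'(2) by metis
    have d1: "fd x x' \<le> fd (G x) (G x') + N"
      using distort[OF inj_f _ _ ne Gne] Np[OF xa(1)] Np[OF xa(2)] x x' by auto
    have d2: "fd (G x) (G x') \<le> fd x x' + N"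
      using distort[OF inj_f' _ _ Gne ne] Np[OF xa(1)] Np[OF xa(2)] x x' by auto
    have e1: "fd x x' = PP \<alpha> (fd z z')" using fd_phi[OF zne] z z' by simp
    have e2: "fd (G x) (G x') = PP \<beta> (fd w w')" using fd_phi[OF wne] w w' by simp
    have "fd z z' \<le> K" using K d1 d2 e1 e2 by metis
    then have "PP \<alpha> (fd z z') \<le> ?M" using PP_strict_mono[of \<alpha>] strict_mono_less_eq by blast
    then show ?thesis using e1 by simp
  qed
  have "inj_on (\<lambda>x. restr x (Suc ?M)) ?S"
  proof (rule inj_onI)
    fix x x' assume x: "x \<in> ?S" and x': "x' \<in> ?S" and e: "restr x (Suc ?M) = restr x' (Suc ?M)"
    show "x = x'"
    proof (rule ccontr)
      assume ne: "x \<noteq> x'"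
      have "fd x x' < Suc ?M" using bnd[OF x x' ne] by simp
      then have "x (fd x x') = x' (fd x x')" using e by (simp add: restr_eq)
      then show False using fd_props(1)[OF ne] by blast
    qed
  qed
  moreover have "(\<lambda>x. restr x (Suc ?M)) ` ?S \<subseteq> {xs. set xs \<subseteq> (UNIV :: bool set) \<and> length xs = Suc ?M}"
    by auto
  moreover have "finite {xs. set xs \<subseteq> (UNIV :: bool set) \<and> length xs = Suc ?M}"
    by (rule finite_lists_length_eq) simp
  ultimately have "finite ?S" by (meson finite_imageD finite_subset)
  then show False using infS by blast
qed


definition psi :: "(nat \<Rightarrow> bool) \<Rightarrow> (nat \<Rightarrow> bool) \<Rightarrow> (nat \<Rightarrow> bool)" where
  "psi \<alpha> x = (\<lambda>k. x (PP \<alpha> k))"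

lemma topspace_cantor [simp]: "topspace cantor_space = UNIV"
  unfolding cantor_space_def by auto

lemma cont_psi: "continuous_map cantor_space cantor_space (psi \<alpha>)"
  unfolding cantor_space_def psi_def continuous_map_componentwise_UNIV
  by (auto intro: continuous_map_product_projection)

lemma cont_phi: "continuous_map cantor_space cantor_space (phi \<alpha>)"
  unfolding cantor_space_def continuous_map_componentwise_UNIV
proof
  fix i
  show "continuous_map (product_topology (\<lambda>_. discrete_topology UNIV) UNIV)
          (discrete_topology UNIV) (\<lambda>x. phi \<alpha> x i)"
  proof (cases "\<exists>k. PP \<alpha> k = i")
    case True
    then obtain k where k: "PP \<alpha> k = i" by blast
    have "(\<lambda>x. phi \<alpha> x i) = (\<lambda>x. x k)" using k phi_PP by blast
    moreover have "continuous_map (product_topology (\<lambda>_. discrete_topology (UNIV::bool set)) UNIV)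
          (discrete_topology UNIV) (\<lambda>x. x k)"
      using continuous_map_product_projection[of k UNIV "\<lambda>_. discrete_topology (UNIV::bool set)"] by simp
    ultimately show ?thesis by simp
  next
    case False
    then have "(\<lambda>x. phi \<alpha> x i) = (\<lambda>x. False)" unfolding phi_def by auto
    then show ?thesis by simp
  qed
qed

lemma psi_phi [simp]: "psi \<alpha> (phi \<alpha> z) = z"
  unfolding psi_def by (simp add: phi_PP)

lemma homeo_sub: "subtopology cantor_space Z homeomorphic_space subtopology cantor_space (phi \<alpha> ` Z)"
proof -
  have "homeomorphic_maps (subtopology cantor_space Z) (subtopology cantor_space (phi \<alpha> ` Z)) (phi \<alpha>) (psi \<alpha>)"
    unfolding homeomorphic_maps_def
  proof (intro conjI)
    show "continuous_map (subtopology cantor_space Z) (subtopology cantor_space (phi \<alpha> ` Z)) (phi \<alpha>)"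
      by (intro continuous_map_into_subtopology continuous_map_from_subtopology cont_phi) auto
    show "continuous_map (subtopology cantor_space (phi \<alpha> ` Z)) (subtopology cantor_space Z) (psi \<alpha>)"
      by (intro continuous_map_into_subtopology continuous_map_from_subtopology cont_psi) auto
  qed auto
  then show ?thesis using homeomorphic_maps_imp_homeomorphic_space by blast
qed


theorem theorem14:
  fixes \<kappa> :: "'k rel"
  assumes "Card_order \<kappa>"
    and "(\<kappa>, card_of (UNIV :: (nat \<Rightarrow> bool) set)) \<in> ordLeq"
    and "uncountable_cofinality \<kappa>"
  shows "\<exists>X :: (nat \<Rightarrow> bool) \<Rightarrow> (nat \<Rightarrow> bool) set.
           inj X \<and>
           (\<forall>\<alpha>. (card_of (X \<alpha>), \<kappa>) \<in> ordIso) \<and>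
           (\<forall>\<alpha> \<beta>. subtopology cantor_space (X \<alpha>) homeomorphic_space subtopology cantor_space (X \<beta>)) \<and>
           (\<forall>\<alpha> \<beta>. \<alpha> \<noteq> \<beta> \<longrightarrow>
              \<not> (Psi_space (AD_family (X \<alpha>)) homeomorphic_space Psi_space (AD_family (X \<beta>))))"
proof -
  have FI: "(card_of (Field \<kappa>), \<kappa>) \<in> ordIso" using card_of_Field_ordIso[OF assms(1)] .
  have "(card_of (Field \<kappa>), card_of (UNIV :: (nat \<Rightarrow> bool) set)) \<in> ordLeq"
    using ordIso_ordLeq_trans[OF FI assms(2)] .
  then obtain e :: "'k \<Rightarrow> (nat \<Rightarrow> bool)" where e: "inj_on e (Field \<kappa>)"
    using card_of_ordLeq[of "Field \<kappa>" "UNIV :: (nat \<Rightarrow> bool) set"] by blast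
  define Z where "Z = e ` Field \<kappa>"
  have "bij_betw e (Field \<kappa>) Z" unfolding Z_def using e by (simp add: bij_betw_imageI)
  then have "(card_of (Field \<kappa>), card_of Z) \<in> ordIso" using card_of_ordIso by blast
  then have ZI: "(card_of Z, \<kappa>) \<in> ordIso" using ordIso_symmetric ordIso_transitive FI by blast
  have uF: "uncountable (Field \<kappa>)"
  proof
    assume "countable (Field \<kappa>)"
    then obtain x where "x \<in> Field \<kappa>" "\<forall>a\<in>Field \<kappa>. (a, x) \<in> \<kappa> \<and> a \<noteq> x"
      using assms(3) unfolding uncountable_cofinality_def by blast
    then show False by blast
  qed
  have uZ: "uncountable Z"
    using uF e countable_image_inj_on unfolding Z_def by blast
  define X where "X \<alpha> = phi \<alpha> ` Z" for \<alpha>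
  have NH: "\<not> (Psi_space (AD_family (X \<alpha>)) homeomorphic_space Psi_space (AD_family (X \<beta>)))"
    if "\<alpha> \<noteq> \<beta>" for \<alpha> \<beta>
    unfolding X_def using main_nonhom[OF that uZ] .
  have "inj X"
  proof (rule injI)
    fix \<alpha> \<beta> assume "X \<alpha> = X \<beta>"
    then show "\<alpha> = \<beta>" using NH by (metis homeomorphic_space_refl)
  qed
  moreover have "(card_of (X \<alpha>), \<kappa>) \<in> ordIso" for \<alpha>
  proof -
    have "bij_betw (phi \<alpha>) Z (X \<alpha>)" unfolding X_def
      using phi_inj by (metis bij_betw_imageI inj_on_subset subset_UNIV)
    then have "(card_of Z, card_of (X \<alpha>)) \<in> ordIso" using card_of_ordIso by blast
    then show ?thesis using ordIso_symmetric ordIso_transitive ZI by blast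
  qed
  moreover have "subtopology cantor_space (X \<alpha>) homeomorphic_space subtopology cantor_space (X \<beta>)" for \<alpha> \<beta>
    unfolding X_def using homeo_sub homeomorphic_space_sym homeomorphic_space_trans by metis
  ultimately show ?thesis using NH by blast
qed

end
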